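(* Let $G$ be a connected graph on $n$ nodes. Let $v_1,\dots,v_\ell\in\mathbb R^n$ and $\lambda_1,\dots,\lambda_\ell\ge0$ with $\sum_i\lambda_i=1$, and put $v=\sum_{i=1}^\ell\lambda_iv_i$. Let $v(t)$ denote the state of the averaging process started from $v$, and $v_i(t)$ the state of the process started from $v_i$; let $\bar v$ and $\bar v_i$ be the corresponding constant vectors of averages. Then for every $t\ge0$, $$\mathbb E\|v(t)-\bar v\|_1\;\le\;\sum_{i=1}^\ell\lambda_i\,\mathbb E\|v_i(t)-\bar v_i\|_1 .$$
   Context: The averaging process on a finite, undirected, connected graph $G=(V,E)$, $V=\{1,\dots,n\}$: the state vector $v(t)\in\mathbb R^n$, $t=0,1,2,\dots$, starts from a given $v(0)$; at each step $t\ge 1$ an edge $\{i,j\}\in E$ is chosen uniformly at random (independently of all previous choices) and both $v_i$ and $v_j$ are replaced by $(v_i+v_j)/2$, all other coordinates unchanged. For an initial vector $w$, its constant vector of averages is $\bar w=(a,\dots,a)^T$ with $a=\frac1n\sum_j w_j$. *)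

theory Defs
  imports "HOL-Probability.Probability"
begin

text \<open>Graphs: vertex set is the finite type 'a (so n = CARD('a)); edges are
  2-element subsets of the vertex set.\<close>

definition adj :: "'a set set \<Rightarrow> ('a \<times> 'a) set" where
  "adj E = {(x, y). {x, y} \<in> E}"

definition connected_graph :: "'a set set \<Rightarrow> bool" where
  "connected_graph E \<longleftrightarrow> (\<forall>e\<in>E. card e = 2) \<and> (\<forall>x y. (x, y) \<in> (adj E)\<^sup>*)"

definition avg_edge :: "'a set \<Rightarrow> ('a \<Rightarrow> real) \<Rightarrow> ('a \<Rightarrow> real)" where
  "avg_edge e w = (\<lambda>k. if k \<in> e then (\<Sum>j\<in>e. w j) / 2 else w k)"

fun avg_process :: "'a set set \<Rightarrow> ('a \<Rightarrow> real) \<Rightarrow> nat \<Rightarrow> ('a \<Rightarrow> real) pmf" where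
  "avg_process E v 0 = return_pmf v"
| "avg_process E v (Suc t) =
     bind_pmf (avg_process E v t)
       (\<lambda>w. if E = {} then return_pmf w else map_pmf (\<lambda>e. avg_edge e w) (pmf_of_set E))"

definition avg_vec :: "('a::finite \<Rightarrow> real) \<Rightarrow> ('a \<Rightarrow> real)" where
  "avg_vec w = (\<lambda>_. (\<Sum>j\<in>UNIV. w j) / real CARD('a))"

definition l1_norm :: "('a::finite \<Rightarrow> real) \<Rightarrow> real" where
  "l1_norm w = (\<Sum>k\<in>UNIV. \<bar>w k\<bar>)"

end

theory Submission
  imports Defs
begin

fun opd :: "'a set set \<Rightarrow> nat \<Rightarrow> (('a \<Rightarrow> real) \<Rightarrow> ('a \<Rightarrow> real)) pmf" where
  "opd E 0 = return_pmf id"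
| "opd E (Suc t) = bind_pmf (opd E t)
     (\<lambda>f. if E = {} then return_pmf f else map_pmf (\<lambda>e. avg_edge e \<circ> f) (pmf_of_set E))"

lemma avg_process_opd: "avg_process E v t = map_pmf (\<lambda>f. f v) (opd E t)"
proof (induction t)
  case 0
  then show ?case by simp
next
  case (Suc t)
  show ?case
    by (simp add: Suc map_bind_pmf bind_map_pmf map_pmf_comp o_def, intro bind_pmf_cong) (auto simp: map_pmf_comp o_def)
qed

definition islin :: "(('a \<Rightarrow> real) \<Rightarrow> ('a \<Rightarrow> real)) \<Rightarrow> bool" where
  "islin f \<longleftrightarrow> (\<forall>(c::nat \<Rightarrow> real) w (l::nat) k.
      f (\<lambda>k. \<Sum>i<l. c i * w i k) k = (\<Sum>i<l. c i * f (w i) k))"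

lemma islin_id: "islin id" by (simp add: islin_def)

lemma islin_avg: assumes "islin f" shows "islin (avg_edge e \<circ> f)"
  unfolding islin_def
proof (intro allI)
  fix c :: "nat \<Rightarrow> real" and w and l :: nat and k
  have h: "\<And>j. f (\<lambda>k. \<Sum>i<l. c i * w i k) j = (\<Sum>i<l. c i * f (w i) j)"
    using assms unfolding islin_def by blast
  show "(avg_edge e \<circ> f) (\<lambda>k. \<Sum>i<l. c i * w i k) k = (\<Sum>i<l. c i * (avg_edge e \<circ> f) (w i) k)"
    by (simp add: avg_edge_def h sum.swap[of _ e] sum_divide_distrib sum_distrib_left)
qed

lemma opd_lin: "f \<in> set_pmf (opd E t) \<Longrightarrow> islin f"
proof (induction t arbitrary: f)
  case 0
  then show ?case using islin_id by (simp add: id_def)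
next
  case (Suc t)
  then show ?case using islin_avg by (auto split: if_splits)
qed

lemma opd_finite: "finite (set_pmf (opd (E::'a::finite set set) t))"
proof (induction t)
  case 0
  then show ?case by simp
next
  case (Suc t)
  have fE: "finite E" by simp
  show ?case using Suc fE by (auto simp: set_pmf_of_set)
qed

theorem proposition2:
  fixes E :: "('a::finite) set set"
    and l :: nat
    and vs :: "nat \<Rightarrow> 'a \<Rightarrow> real"
    and lam :: "nat \<Rightarrow> real"
    and t :: nat
  assumes "connected_graph E"
    and "\<forall>i<l. lam i \<ge> 0"
    and "(\<Sum>i<l. lam i) = 1"
  shows "measure_pmf.expectation
           (avg_process E (\<lambda>k. \<Sum>i<l. lam i * vs i k) t)
           (\<lambda>w. l1_norm (\<lambda>k. w k - avg_vec (\<lambda>k. \<Sum>i<l. lam i * vs i k) k))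
         \<le> (\<Sum>i<l. lam i *
              measure_pmf.expectation (avg_process E (vs i) t)
                (\<lambda>w. l1_norm (\<lambda>k. w k - avg_vec (vs i) k)))"
proof -
  let ?D = "opd E t"
  have av: "avg_vec (\<lambda>k. \<Sum>i<l. lam i * vs i k) k = (\<Sum>i<l. lam i * avg_vec (vs i) k)" for k
    by (simp add: avg_vec_def sum.swap[of _ UNIV] sum_divide_distrib sum_distrib_left)
  have pt: "l1_norm (\<lambda>k. f (\<lambda>k. \<Sum>i<l. lam i * vs i k) k - avg_vec (\<lambda>k. \<Sum>i<l. lam i * vs i k) k)
      \<le> (\<Sum>i<l. lam i * l1_norm (\<lambda>k. f (vs i) k - avg_vec (vs i) k))"
    if f: "f \<in> set_pmf ?D" for f
  proof -
    have lf: "f (\<lambda>k. \<Sum>i<l. lam i * vs i k) k = (\<Sum>i<l. lam i * f (vs i) k)" for k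
      using opd_lin[OF f] unfolding islin_def by blast
    have "l1_norm (\<lambda>k. f (\<lambda>k. \<Sum>i<l. lam i * vs i k) k - avg_vec (\<lambda>k. \<Sum>i<l. lam i * vs i k) k)
        = (\<Sum>k\<in>UNIV. \<bar>\<Sum>i<l. lam i * (f (vs i) k - avg_vec (vs i) k)\<bar>)"
      by (simp add: l1_norm_def lf av sum_subtractf right_diff_distrib)
    also have "\<dots> \<le> (\<Sum>k\<in>UNIV. \<Sum>i<l. lam i * \<bar>f (vs i) k - avg_vec (vs i) k\<bar>)"
    proof (rule sum_mono)
      fix k
      have "\<bar>\<Sum>i<l. lam i * (f (vs i) k - avg_vec (vs i) k)\<bar>
          \<le> (\<Sum>i<l. \<bar>lam i * (f (vs i) k - avg_vec (vs i) k)\<bar>)" by (rule sum_abs)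
      also have "\<dots> = (\<Sum>i<l. lam i * \<bar>f (vs i) k - avg_vec (vs i) k\<bar>)"
        using assms(2) by (intro sum.cong) (auto simp: abs_mult)
      finally show "\<bar>\<Sum>i<l. lam i * (f (vs i) k - avg_vec (vs i) k)\<bar>
          \<le> (\<Sum>i<l. lam i * \<bar>f (vs i) k - avg_vec (vs i) k\<bar>)" .
    qed
    also have "\<dots> = (\<Sum>i<l. lam i * l1_norm (\<lambda>k. f (vs i) k - avg_vec (vs i) k))"
      by (simp add: l1_norm_def sum.swap[of _ UNIV] sum_distrib_left)
    finally show ?thesis .
  qed
  have fin: "finite (set_pmf ?D)" by (rule opd_finite)
  have int: "integrable (measure_pmf ?D) g" for g :: "_ \<Rightarrow> real"
    by (rule integrable_measure_pmf_finite[OF fin])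
  have "measure_pmf.expectation
           (avg_process E (\<lambda>k. \<Sum>i<l. lam i * vs i k) t)
           (\<lambda>w. l1_norm (\<lambda>k. w k - avg_vec (\<lambda>k. \<Sum>i<l. lam i * vs i k) k))
      = measure_pmf.expectation ?D (\<lambda>f. l1_norm (\<lambda>k. f (\<lambda>k. \<Sum>i<l. lam i * vs i k) k - avg_vec (\<lambda>k. \<Sum>i<l. lam i * vs i k) k))"
    by (simp add: avg_process_opd)
  also have "\<dots> \<le> measure_pmf.expectation ?D (\<lambda>f. \<Sum>i<l. lam i * l1_norm (\<lambda>k. f (vs i) k - avg_vec (vs i) k))"
    by (rule integral_mono_AE[OF int int]) (simp add: AE_measure_pmf_iff pt)
  also have "\<dots> = (\<Sum>i<l. measure_pmf.expectation ?D (\<lambda>f. lam i * l1_norm (\<lambda>k. f (vs i) k - avg_vec (vs i) k)))"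
    by (subst Bochner_Integration.integral_sum) (auto simp: int)
  also have "\<dots> = (\<Sum>i<l. lam i *
              measure_pmf.expectation (avg_process E (vs i) t)
                (\<lambda>w. l1_norm (\<lambda>k. w k - avg_vec (vs i) k)))"
    by (simp add: avg_process_opd)
  finally show ?thesis .
qed

end
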